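(* For all monitors $m,n$: $m\simeq_\omega n$ if and only if, for every closed substitution $\sigma$, the set $$\mathcal{S}_{m,n,\sigma}=\big(L_a(\sigma(m))\setminus L_a(\sigma(n))\big)\cup\big(L_r(\sigma(m))\setminus L_r(\sigma(n))\big)\cup\big(L_a(\sigma(n))\setminus L_a(\sigma(m))\big)\cup\big(L_r(\sigma(n))\setminus L_r(\sigma(m))\big)$$ is finite.
   Context: Monitors: terms $m,n ::= v \mid a.m \mid m+n \mid x$ over a nonempty action set $\mathit{Act}$ and variables $x$, verdicts $v::=\mathit{end}\mid\mathit{yes}\mid\mathit{no}$; a closed substitution maps each variable to a variable-free monitor. Semantics: $\xrightarrow{\alpha}$ ($\alpha\in\mathit{Act}\cup\{\tau\}$) is the least relation with $a.m\xrightarrow{a}m$; $m\xrightarrow{\alpha}m'$ implies $m+n\xrightarrow{\alpha}m'$ and $n+m\xrightarrow{\alpha}m'$; $v\xrightarrow{\alpha}v$ for verdicts $v$. Weak transitions: $m\xRightarrow{\varepsilon}m'$ iff $m(\xrightarrow{\tau})^*m'$; $m\xRightarrow{a}m'$ iff $m\xRightarrow{\varepsilon}\xrightarrow{a}\xRightarrow{\varepsilon}m'$; $m\xRightarrow{as'}m'$ ($s'\ne\varepsilon$) iff $m\xRightarrow{a}m_1\xRightarrow{s'}m'$. For closed $m$, $L_a(m)=\{s\in\mathit{Act}^*\mid m\xRightarrow{s}\mathit{yes}\}$, $L_r(m)=\{s\in\mathit{Act}^*\mid m\xRightarrow{s}\mathit{no}\}$; closed $m\simeq_\omega n$ iff $L_a(m)\cdot\mathit{Act}^\omega=L_a(n)\cdot\mathit{Act}^\omega$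 and $L_r(m)\cdot\mathit{Act}^\omega=L_r(n)\cdot\mathit{Act}^\omega$ ($\mathit{Act}^\omega$: infinite sequences over $\mathit{Act}$); for open terms $m\simeq_\omega n$ iff $\sigma(m)\simeq_\omega\sigma(n)$ for every closed substitution $\sigma$. *)

theory Defs
  imports Main
begin

datatype verdict = VEnd | VYes | VNo

datatype ('a, 'v) mon =
    Verdict verdict
  | Prefix 'a "('a, 'v) mon"
  | Choice "('a, 'v) mon" "('a, 'v) mon"
  | Var 'v

fun vars :: "('a, 'v) mon \<Rightarrow> 'v set" where
  "vars (Verdict v) = {}"
| "vars (Prefix a m) = vars m"
| "vars (Choice m n) = vars m \<union> vars n"
| "vars (Var x) = {x}"

definition closed :: "('a, 'v) mon \<Rightarrow> bool" where
  "closed m \<longleftrightarrow> vars m = {}"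

definition closed_subst :: "('v \<Rightarrow> ('a, 'v) mon) \<Rightarrow> bool" where
  "closed_subst \<sigma> \<longleftrightarrow> (\<forall>x. closed (\<sigma> x))"

fun subst :: "('v \<Rightarrow> ('a, 'v) mon) \<Rightarrow> ('a, 'v) mon \<Rightarrow> ('a, 'v) mon" where
  "subst \<sigma> (Verdict v) = Verdict v"
| "subst \<sigma> (Prefix a m) = Prefix a (subst \<sigma> m)"
| "subst \<sigma> (Choice m n) = Choice (subst \<sigma> m) (subst \<sigma> n)"
| "subst \<sigma> (Var x) = \<sigma> x"

text \<open>Labels: Some a is the action a, None is the silent action tau.\<close>
inductive step :: "('a, 'v) mon \<Rightarrow> 'a option \<Rightarrow> ('a, 'v) mon \<Rightarrow> bool" where
  act:     "step (Prefix a m) (Some a) m"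
| choiceL: "step m \<alpha> m' \<Longrightarrow> step (Choice m n) \<alpha> m'"
| choiceR: "step m \<alpha> m' \<Longrightarrow> step (Choice n m) \<alpha> m'"
| verd:    "step (Verdict v) \<alpha> (Verdict v)"

definition tau_star :: "('a, 'v) mon \<Rightarrow> ('a, 'v) mon \<Rightarrow> bool" where
  "tau_star = (\<lambda>m m'. step m None m')\<^sup>*\<^sup>*"

fun weak :: "('a, 'v) mon \<Rightarrow> 'a list \<Rightarrow> ('a, 'v) mon \<Rightarrow> bool" where
  "weak m [] m' = tau_star m m'"
| "weak m [a] m' = (\<exists>m1 m2. tau_star m m1 \<and> step m1 (Some a) m2 \<and> tau_star m2 m')"
| "weak m (a # b # s) m' = (\<exists>m1. weak m [a] m1 \<and> weak m1 (b # s) m')"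

definition La :: "('a, 'v) mon \<Rightarrow> 'a list set" where
  "La m = {s. weak m s (Verdict VYes)}"

definition Lr :: "('a, 'v) mon \<Rightarrow> 'a list set" where
  "Lr m = {s. weak m s (Verdict VNo)}"

text \<open>Infinite sequences over 'a are functions nat \<Rightarrow> 'a; L \<cdot> Act^\<omega>.\<close>
definition conc_inf :: "'a list \<Rightarrow> (nat \<Rightarrow> 'a) \<Rightarrow> (nat \<Rightarrow> 'a)" where
  "conc_inf s u = (\<lambda>i. if i < length s then s ! i else u (i - length s))"

definition omega_ext :: "'a list set \<Rightarrow> (nat \<Rightarrow> 'a) set" where
  "omega_ext L = {conc_inf s u | s u. s \<in> L}"

definition omega_eq_closed :: "('a, 'v) mon \<Rightarrow> ('a, 'v) mon \<Rightarrow> bool" where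
  "omega_eq_closed m n \<longleftrightarrow>
     omega_ext (La m) = omega_ext (La n) \<and> omega_ext (Lr m) = omega_ext (Lr n)"

definition omega_eq :: "('a, 'v) mon \<Rightarrow> ('a, 'v) mon \<Rightarrow> bool" where
  "omega_eq m n \<longleftrightarrow>
     (\<forall>\<sigma>. closed_subst \<sigma> \<longrightarrow> omega_eq_closed (subst \<sigma> m) (subst \<sigma> n))"

definition Sdiff :: "('a, 'v) mon \<Rightarrow> ('a, 'v) mon \<Rightarrow> ('v \<Rightarrow> ('a, 'v) mon) \<Rightarrow> 'a list set" where
  "Sdiff m n \<sigma> =
     (La (subst \<sigma> m) - La (subst \<sigma> n)) \<union> (Lr (subst \<sigma> m) - Lr (subst \<sigma> n)) \<union>
     (La (subst \<sigma> n) - La (subst \<sigma> m)) \<union> (Lr (subst \<sigma> n) - Lr (subst \<sigma> m))"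

end

theory Submission
  imports Defs
begin

lemma stepNone: "step M \<alpha> M' \<Longrightarrow> \<alpha> = None \<Longrightarrow> \<exists>v. M' = Verdict v"
  by (induction rule: step.induct) auto

lemma stepVerdict: "step (Verdict v) \<alpha> M' \<Longrightarrow> M' = Verdict v"
  by (auto elim: step.cases)

lemma tau_cases: "tau_star M M' \<Longrightarrow> M' = M \<or> (step M None M' \<and> (\<exists>v. M' = Verdict v))"
  unfolding tau_star_def
proof (induction rule: rtranclp_induct)
  case base then show ?case by simp
next
  case (step y z)
  then show ?case using stepNone stepVerdict by metis
qed

lemma tau_from_verdict: "tau_star (Verdict v) M' \<Longrightarrow> M' = Verdict v"
  using tau_cases stepVerdict by metis

lemma tau_refl: "tau_star M M" unfolding tau_star_def by simp

lemma tau_trans: "tau_star M M1 \<Longrightarrow> tau_star M1 M2 \<Longrightarrow> tau_star M M2"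
  unfolding tau_star_def by (rule rtranclp_trans)

lemma tau_step: "step M None M' \<Longrightarrow> tau_star M M'"
  unfolding tau_star_def by (rule r_into_rtranclp)

lemma step_some: "step M \<alpha> M' \<Longrightarrow> (\<exists>v. M' = Verdict v \<and> (\<forall>\<beta>. step M \<beta> M')) \<or>
   (\<exists>a. \<alpha> = Some a \<and> size M' < size M \<and> set1_mon M' \<subseteq> set1_mon M \<and> a \<in> set1_mon M)"
proof (induction rule: step.induct)
  case (act a m) then show ?case by auto
next
  case (choiceL m \<alpha> m' n) then show ?case by (auto intro: step.intros)
next
  case (choiceR m \<alpha> m' n) then show ?case by (auto intro: step.intros)
next
  case (verd v \<alpha>) then show ?case by (auto intro: step.intros)
qed

lemma weak_Cons: "weak M (a#s) M' \<longleftrightarrow> (\<exists>M1. weak M [a] M1 \<and> weak M1 s M')"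
proof (cases s)
  case Nil
  have "weak M [a] M' \<longleftrightarrow> (\<exists>M1. weak M [a] M1 \<and> tau_star M1 M')"
  proof
    assume "weak M [a] M'" then show "\<exists>M1. weak M [a] M1 \<and> tau_star M1 M'" using tau_refl by blast
  next
    assume "\<exists>M1. weak M [a] M1 \<and> tau_star M1 M'"
    then obtain M1 m1 m2 where "tau_star M m1" "step m1 (Some a) m2" "tau_star m2 M1" "tau_star M1 M'" by auto
    then show "weak M [a] M'" using tau_trans[of m2 M1 M'] by auto
  qed
  then show ?thesis using Nil by simp
next
  case (Cons b t) then show ?thesis by simp
qed

lemma weak_tau_pre1: "tau_star M M0 \<Longrightarrow> weak M0 [a] M' \<Longrightarrow> weak M [a] M'"
  using tau_trans by auto

lemma weak_tau_pre: "tau_star M M0 \<Longrightarrow> weak M0 s M' \<Longrightarrow> weak M s M'"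
proof (cases s)
  case Nil
  then show "tau_star M M0 \<Longrightarrow> weak M0 s M' \<Longrightarrow> weak M s M'" using tau_trans by auto
next
  case (Cons a t)
  assume "tau_star M M0" "weak M0 s M'"
  then show ?thesis using Cons weak_Cons weak_tau_pre1 by metis
qed

lemma weak_append: "weak M s M1 \<Longrightarrow> weak M1 t M2 \<Longrightarrow> weak M (s@t) M2"
proof (induction s arbitrary: M)
  case Nil then show ?case using weak_tau_pre by auto
next
  case (Cons a s) then show ?case using weak_Cons by (metis append_Cons)
qed

lemma weak_verdict: "weak (Verdict v) s (Verdict v)"
proof (induction s)
  case Nil then show ?case using tau_refl by simp
next
  case (Cons a s)
  have "weak (Verdict v) [a] (Verdict v)" using tau_refl[of "Verdict v"] step.verd[of v "Some a"] by auto
  then show ?case using Cons weak_Cons by metis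
qed

lemma weak_from_verdict: "weak (Verdict v) s M' \<Longrightarrow> M' = Verdict v"
proof (induction s arbitrary: M')
  case Nil then show ?case using tau_from_verdict by simp
next
  case (Cons a s)
  then obtain M1 where h: "weak (Verdict v) [a] M1" "weak M1 s M'" using weak_Cons by metis
  then obtain m1 m2 where "tau_star (Verdict v) m1" "step m1 (Some a) m2" "tau_star m2 M1" by auto
  then have "M1 = Verdict v" using tau_from_verdict stepVerdict by metis
  then show ?case using h Cons.IH by auto
qed

lemma gen: "weak M t (Verdict v) \<Longrightarrow> \<exists>g h. t = g@h \<and> length g \<le> size M \<and> set g \<subseteq> set1_mon M \<and> weak M g (Verdict v)"
proof (induction t arbitrary: M)
  case Nil then show ?case by fastforce
next
  case (Cons a t)
  have triv: "\<exists>g h. a#t = g@h \<and> length g \<le> size M \<and> set g \<subseteq> set1_mon M \<and> weak M g (Verdict v)"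
    if "step M None (Verdict v)"
  proof -
    have "weak M [] (Verdict v)" using that tau_step by simp
    then show ?thesis by (intro exI[of _ "[]"] exI[of _ "a#t"]) simp
  qed
  obtain M1 where h1: "weak M [a] M1" "weak M1 t (Verdict v)" using Cons.prems weak_Cons by metis
  then obtain Ma Mb where h2: "tau_star M Ma" "step Ma (Some a) Mb" "tau_star Mb M1" by auto
  from tau_cases[OF h2(1)] show ?case
  proof
    assume "Ma = M"
    from step_some[OF h2(2)] show ?case
    proof
      assume "\<exists>v. Mb = Verdict v \<and> (\<forall>\<beta>. step Ma \<beta> Mb)"
      then obtain v' where "Mb = Verdict v'" "step M None Mb" using \<open>Ma = M\<close> by auto
      moreover then have "M1 = Verdict v'" using h2(3) tau_from_verdict by auto
      moreover then have "v' = v" using h1(2) weak_from_verdict by force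
      ultimately show ?case using triv by auto
    next
      assume "\<exists>b. Some a = Some b \<and> size Mb < size Ma \<and> set1_mon Mb \<subseteq> set1_mon Ma \<and> b \<in> set1_mon Ma"
      then have s: "size Mb < size M" "set1_mon Mb \<subseteq> set1_mon M" "a \<in> set1_mon M"
        using \<open>Ma = M\<close> by auto
      have "weak Mb t (Verdict v)" using weak_tau_pre h2(3) h1(2) by metis
      from Cons.IH[OF this] obtain g h where g: "t = g@h" "length g \<le> size Mb" "set g \<subseteq> set1_mon Mb"
        "weak Mb g (Verdict v)" by blast
      have "weak M [a] Mb" using h2(2) \<open>Ma = M\<close> tau_refl by auto
      then have "weak M (a#g) (Verdict v)" using g(4) weak_Cons by metis
      then show ?case using g s by (intro exI[of _ "a#g"] exI[of _ h]) auto
    qed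
  next
    assume "step M None Ma \<and> (\<exists>v. Ma = Verdict v)"
    then obtain v' where "Ma = Verdict v'" "step M None Ma" by auto
    moreover then have "M1 = Verdict v'" using h2 tau_from_verdict stepVerdict by metis
    moreover then have "v' = v" using h1(2) weak_from_verdict by force
    ultimately show ?case using triv by auto
  qed
qed

definition Lset :: "verdict \<Rightarrow> ('a, 'v) mon \<Rightarrow> 'a list set" where
  "Lset v M = {s. weak M s (Verdict v)}"

lemma up: "s \<in> Lset v M \<Longrightarrow> s @ t \<in> Lset v M"
  unfolding Lset_def using weak_append weak_verdict by blast

lemma prefix_eq:
  assumes "conc_inf s u = conc_inf t u'" "length g \<le> length s" "t = g @ h"
  shows "s = g @ drop (length g) s"
proof -
  have "take (length g) s = g"
  proof (rule nth_equalityI)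
    show "length (take (length g) s) = length g" using assms by simp
    fix i assume "i < length (take (length g) s)"
    then have i: "i < length g" by simp
    have "conc_inf s u i = conc_inf t u' i" using assms(1) by simp
    then show "take (length g) s ! i = g ! i"
      using i assms(2,3) unfolding conc_inf_def by (auto simp: nth_append)
  qed
  then show ?thesis by (metis append_take_drop_id)
qed

lemma nth_beyond:
  assumes "conc_inf s u = conc_inf t u'" "length s < length g" "t = g @ h"
  shows "u 0 \<in> set g"
proof -
  have "conc_inf s u (length s) = conc_inf t u' (length s)" using assms(1) by simp
  then have "u 0 = g ! length s" using assms(2,3) unfolding conc_inf_def by (auto simp: nth_append)
  then show ?thesis using assms(2) by simp
qed

lemma finite_set1: "finite (set1_mon N)"
  by (induction N) auto

lemma fwd:
  assumes "omega_ext (Lset v M) \<subseteq> omega_ext (Lset v N)"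
  shows "finite (Lset v M - Lset v N)"
proof -
  have key: "length s < size N \<and> c \<in> set1_mon N" if s: "s \<in> Lset v M - Lset v N" for s c
  proof -
    have "conc_inf s (\<lambda>_. c) \<in> omega_ext (Lset v M)" using s unfolding omega_ext_def by blast
    then have "conc_inf s (\<lambda>_. c) \<in> omega_ext (Lset v N)" using assms by blast
    then obtain t u' where tu: "conc_inf s (\<lambda>_. c) = conc_inf t u'" "t \<in> Lset v N"
      unfolding omega_ext_def by blast
    then obtain g h where g: "t = g@h" "length g \<le> size N" "set g \<subseteq> set1_mon N" "weak N g (Verdict v)"
      using gen unfolding Lset_def by blast
    have "\<not> length g \<le> length s"
    proof
      assume "length g \<le> length s"
      then have "s = g @ drop (length g) s" using prefix_eq tu(1) g(1) by blast
      then have "s \<in> Lset v N" using up[of g v N] g(4) unfolding Lset_def by (metis mem_Collect_eq)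
      then show False using s by blast
    qed
    then have "length s < length g" by simp
    moreover have "(\<lambda>_. c) (0::nat) \<in> set g" using nth_beyond tu(1) g(1) calculation by blast
    ultimately show ?thesis using g by auto
  qed
  show ?thesis
  proof (cases "Lset v M - Lset v N = {}")
    case True then show ?thesis by (metis finite.emptyI)
  next
    case False
    then obtain s where "s \<in> Lset v M - Lset v N" by blast
    then have "UNIV \<subseteq> set1_mon N" using key by blast
    then have fU: "finite (UNIV :: 'a set)" using finite_set1 finite_subset by blast
    have "Lset v M - Lset v N \<subseteq> {xs. set xs \<subseteq> UNIV \<and> length xs \<le> size N}"
      using key by fastforce
    then show ?thesis using finite_lists_length_le[OF fU] finite_subset by blast
  qed
qed

lemma bwd:
  assumes "finite (Lset v M - Lset v N)"
  shows "omega_ext (Lset v M) \<subseteq> omega_ext (Lset v N)"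
proof
  fix w assume "w \<in> omega_ext (Lset v M)"
  then obtain s u where w: "w = conc_inf s u" "s \<in> Lset v M" unfolding omega_ext_def by blast
  define f where "f k = s @ map u [0..<k]" for k
  have "inj f" unfolding inj_def f_def by (metis length_append length_map length_upt diff_zero add_left_cancel)
  then have "infinite (range f)" using finite_imageD[of f UNIV] infinite_UNIV_nat by blast
  moreover have "range f \<subseteq> Lset v M" using up w(2) unfolding f_def by blast
  ultimately have "\<not> range f \<subseteq> Lset v M - Lset v N" using assms finite_subset by blast
  then obtain k where k: "f k \<in> Lset v N" using \<open>range f \<subseteq> Lset v M\<close> by blast
  have "conc_inf (f k) (\<lambda>i. u (i+k)) = w"
    unfolding w(1) conc_inf_def f_def by (auto simp: nth_append)
  then show "w \<in> omega_ext (Lset v N)" using k unfolding omega_ext_def by blast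
qed

lemma per: "omega_eq_closed M N \<longleftrightarrow>
  finite ((La M - La N) \<union> (Lr M - Lr N) \<union> (La N - La M) \<union> (Lr N - Lr M))"
proof -
  have a: "La X = Lset VYes X" "Lr X = Lset VNo X" for X :: "('a,'b) mon"
    unfolding La_def Lr_def Lset_def by auto
  show ?thesis unfolding omega_eq_closed_def a
    using fwd[of VYes M N] bwd[of VYes M N] fwd[of VNo M N] bwd[of VNo M N]
      fwd[of VYes N M] bwd[of VYes N M] fwd[of VNo N M] bwd[of VNo N M]
    by (auto intro: subset_antisym)
qed

theorem mainTheorem18:
  fixes m n :: "('a, 'v) mon"
  shows "omega_eq m n \<longleftrightarrow> (\<forall>\<sigma>. closed_subst \<sigma> \<longrightarrow> finite (Sdiff m n \<sigma>))"
  unfolding omega_eq_def Sdiff_def per by simp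

end
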